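(* Let $n\geq 5$ and let $T$ be an $n$-tournament. Then $T$ is $(n-2)$-spectrally monomorphic if and only if $T$ is transitive or doubly regular. Moreover, if $T$ is doubly regular, then the common characteristic polynomial of the adjacency matrices of all the $(n-2)$-vertex subtournaments of $T$ is \[ \left(z^{2}+z+\tfrac{n+1}{4}\right)^{\frac{n-5}{2}}\left(z^{3}-\tfrac{n-5}{2}z^{2}-\tfrac{n-5}{2}z-\tfrac{n-3}{4}\right). \]
   Context: An $n$-tournament is a digraph on $n$ vertices in which every pair of distinct vertices is joined by exactly one arc; if the arc goes from $u$ to $v$, $u$ dominates $v$. With respect to an ordering $v_1,\dots,v_n$ of the vertices, the adjacency matrix $A=(a_{ij})$ has $a_{ij}=1$ if $v_i$ dominates $v_j$ and $0$ otherwise. The characteristic polynomial of a square matrix $M$ is $P_M(z)=\det(zI-M)$. A square matrix is $k$-spectrally monomorphic if all its $k\times k$ principal submatrices have the same characteristic polynomial; a tournament is $k$-spectrally monomorphic if its adjacency matrix is (equivalently, all its $k$-vertex subtournaments have adjacency matrices with the same characteristic polynomial). A tournament is transitive if whenever $u$ dominates $v$ and $v$ dominates $w$, then $u$ dominates $w$. A tournament is doubly regular if the number $|N^+(x)\cap N^+(y)|$ of vertices dominated by both $x$ and $y$ is the same for all pairs of distinct vertices $x,y$, where $N^+(x)$ is the set of vertices dominated by $x$. *)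

theory Defs
  imports "Jordan_Normal_Form.Char_Poly" "Jordan_Normal_Form.DL_Submatrix"
begin

text \<open>An n-tournament on the vertex set {0..<n} (vertex i is v_(i+1));
  T u v means u dominates v.\<close>
definition tournament :: "nat \<Rightarrow> (nat \<Rightarrow> nat \<Rightarrow> bool) \<Rightarrow> bool" where
  "tournament n T \<longleftrightarrow> (\<forall>u<n. \<not> T u u) \<and>
     (\<forall>u<n. \<forall>v<n. u \<noteq> v \<longrightarrow> (T u v \<or> T v u) \<and> \<not> (T u v \<and> T v u))"

definition adj_mat :: "nat \<Rightarrow> (nat \<Rightarrow> nat \<Rightarrow> bool) \<Rightarrow> real mat" where
  "adj_mat n T = mat n n (\<lambda>(i,j). if T i j then 1 else 0)"

definition principal_submatrix :: "'a mat \<Rightarrow> nat set \<Rightarrow> 'a mat" where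
  "principal_submatrix A I = submatrix A I I"

definition spectrally_monomorphic :: "nat \<Rightarrow> 'a :: comm_ring_1 mat \<Rightarrow> bool" where
  "spectrally_monomorphic k A \<longleftrightarrow>
     (\<forall>I J. I \<subseteq> {0..<dim_row A} \<and> J \<subseteq> {0..<dim_row A} \<and> card I = k \<and> card J = k \<longrightarrow>
        char_poly (principal_submatrix A I) = char_poly (principal_submatrix A J))"

definition transitive_tournament :: "nat \<Rightarrow> (nat \<Rightarrow> nat \<Rightarrow> bool) \<Rightarrow> bool" where
  "transitive_tournament n T \<longleftrightarrow>
     (\<forall>u<n. \<forall>v<n. \<forall>w<n. T u v \<and> T v w \<longrightarrow> T u w)"

definition doubly_regular :: "nat \<Rightarrow> (nat \<Rightarrow> nat \<Rightarrow> bool) \<Rightarrow> bool" where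
  "doubly_regular n T \<longleftrightarrow>
     (\<exists>c. \<forall>x<n. \<forall>y<n. x \<noteq> y \<longrightarrow> card {z. z < n \<and> T x z \<and> T y z} = c)"

end

theory Submission imports Defs begin

definition sh :: "nat \<Rightarrow> nat \<Rightarrow> nat" where "sh x i = (if i < x then i else Suc i)"

lemma sh_inj: "inj (sh x)" unfolding sh_def inj_def by auto

lemma sh_lt: "i < N \<Longrightarrow> sh x i < Suc N" unfolding sh_def by auto

lemma sh_image: assumes "x \<le> N" shows "sh x ` {0..<N} = {0..<Suc N} - {x}"
proof
  show "sh x ` {0..<N} \<subseteq> {0..<Suc N} - {x}" unfolding sh_def by auto
  show "{0..<Suc N} - {x} \<subseteq> sh x ` {0..<N}"
  proof
    fix i assume i: "i \<in> {0..<Suc N} - {x}"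
    show "i \<in> sh x ` {0..<N}"
    proof (cases "i < x")
      case True then show ?thesis using i assms unfolding sh_def by (intro image_eqI[of _ _ i]) auto
    next
      case False then have "i > 0" "i - 1 \<ge> x" using i by auto
      then show ?thesis using i unfolding sh_def by (intro image_eqI[of _ _ "i - 1"]) auto
    qed
  qed
qed

lemma sum_sh: assumes "x \<le> N" shows "(\<Sum>i<N. g (sh x i)) = (\<Sum>i\<in>{0..<Suc N} - {x}. g i)"
proof -
  have "(\<Sum>i\<in>{0..<Suc N} - {x}. g i) = (\<Sum>i\<in>sh x ` {0..<N}. g i)" using assms by (simp add: sh_image)
  also have "\<dots> = (\<Sum>i\<in>{0..<N}. g (sh x i))"
    by (rule sum.reindex[unfolded comp_def]) (meson inj_on_subset sh_inj subset_UNIV)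
  finally show ?thesis by (simp add: atLeast0LessThan)
qed

lemma adj_mat_carrier[simp]: "adj_mat n T \<in> carrier_mat n n"
  unfolding adj_mat_def by simp

lemma adj_mat_dim[simp]: "dim_row (adj_mat n T) = n" "dim_col (adj_mat n T) = n"
  unfolding adj_mat_def by simp_all

lemma adj_mat_index[simp]: "i < n \<Longrightarrow> j < n \<Longrightarrow> adj_mat n T $$ (i,j) = (if T i j then 1 else 0)"
  unfolding adj_mat_def by simp

lemma mat_delete_adj: "mat_delete (adj_mat (Suc N) T) x x = adj_mat N (\<lambda>i j. T (sh x i) (sh x j))"
  by (rule eq_matI) (auto simp: mat_delete_def sh_def)

lemma tournament_sh: assumes "tournament (Suc N) T" shows "tournament N (\<lambda>i j. T (sh x i) (sh x j))"
  using assms sh_lt[of _ N x] sh_inj[of x] unfolding tournament_def inj_def by metis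

section \<open>Cycle counting\<close>

definition w3 :: "(nat \<Rightarrow> nat \<Rightarrow> bool) \<Rightarrow> nat \<Rightarrow> nat \<Rightarrow> nat \<Rightarrow> real" where
  "w3 T a b c = (if T a b \<and> T b c \<and> T c a then 1 else 0)"

definition CC :: "(nat \<Rightarrow> nat \<Rightarrow> bool) \<Rightarrow> nat set \<Rightarrow> real" where
  "CC T S = (\<Sum>a\<in>S. \<Sum>b\<in>S. \<Sum>c\<in>S. w3 T a b c)"

definition cv :: "(nat \<Rightarrow> nat \<Rightarrow> bool) \<Rightarrow> nat set \<Rightarrow> nat \<Rightarrow> real" where
  "cv T S x = (\<Sum>b\<in>S. \<Sum>c\<in>S. w3 T x b c)"

lemma w3_cyc: "w3 T a b c = w3 T b c a" unfolding w3_def by auto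

lemma w3_irr: assumes "\<not> T a a" shows "w3 T a a c = 0" "w3 T a c a = 0" "w3 T c a a = 0"
  using assms unfolding w3_def by auto

lemma CC_reindex: assumes "inj_on f S" shows "CC (\<lambda>i j. T (f i) (f j)) S = CC T (f ` S)"
  unfolding CC_def w3_def using assms by (simp add: sum.reindex)

lemma sum_remove': "finite S \<Longrightarrow> x \<in> S \<Longrightarrow> (\<Sum>a\<in>S. g a) = g x + (\<Sum>a\<in>S-{x}. g a)"
  by (simp add: sum.remove)

lemma CC_remove:
  assumes S: "finite S" "x \<in> S" and irr: "\<forall>a\<in>S. \<not> T a a"
  shows "CC T S = CC T (S - {x}) + 3 * cv T S x"
proof -
  let ?S = "S - {x}"
  have "CC T S = cv T S x + (\<Sum>a\<in>?S. \<Sum>b\<in>S. \<Sum>c\<in>S. w3 T a b c)"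
    unfolding CC_def cv_def by (rule sum_remove'[OF S])
  also have "(\<Sum>a\<in>?S. \<Sum>b\<in>S. \<Sum>c\<in>S. w3 T a b c) =
     (\<Sum>a\<in>?S. \<Sum>c\<in>S. w3 T a x c) + (\<Sum>a\<in>?S. \<Sum>b\<in>?S. \<Sum>c\<in>S. w3 T a b c)"
    by (subst sum.distrib[symmetric], rule sum.cong[OF refl], rule sum_remove'[OF S])
  also have "(\<Sum>a\<in>?S. \<Sum>b\<in>?S. \<Sum>c\<in>S. w3 T a b c) =
     (\<Sum>a\<in>?S. \<Sum>b\<in>?S. w3 T a b x) + CC T ?S"
    unfolding CC_def
    by (subst sum.distrib[symmetric], rule sum.cong[OF refl], subst sum.distrib[symmetric],
        rule sum.cong[OF refl], rule sum_remove'[OF S])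
  also have "(\<Sum>a\<in>?S. \<Sum>c\<in>S. w3 T a x c) = (\<Sum>a\<in>S. \<Sum>c\<in>S. w3 T a x c)"
    using S irr by (subst (2) sum_remove'[OF S]) (simp add: w3_irr)
  also have "\<dots> = (\<Sum>a\<in>S. \<Sum>c\<in>S. w3 T x c a)" by (simp add: w3_cyc[of T _ x])
  also have "\<dots> = cv T S x" unfolding cv_def by (rule sum.swap)
  also have "(\<Sum>a\<in>?S. \<Sum>b\<in>?S. w3 T a b x) = (\<Sum>a\<in>S. \<Sum>b\<in>S. w3 T a b x)"
  proof -
    have "(\<Sum>a\<in>S. \<Sum>b\<in>S. w3 T a b x) = (\<Sum>a\<in>S. \<Sum>b\<in>?S. w3 T a b x)"
      using S irr by (intro sum.cong[OF refl]) (subst sum_remove'[OF S], simp_all add: w3_irr)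
    also have "\<dots> = (\<Sum>a\<in>?S. \<Sum>b\<in>?S. w3 T a b x)"
      using S irr by (subst sum_remove'[OF S]) (simp add: w3_irr)
    finally show ?thesis by simp
  qed
  also have "\<dots> = cv T S x" unfolding cv_def
    by (intro sum.cong[OF refl]) (metis w3_cyc)
  finally show ?thesis by simp
qed

lemma cv_sum: "(\<Sum>x\<in>S. cv T S x) = CC T S" unfolding cv_def CC_def by simp

definition ev :: "(nat \<Rightarrow> nat \<Rightarrow> bool) \<Rightarrow> nat set \<Rightarrow> nat \<Rightarrow> nat \<Rightarrow> real" where
  "ev T S x y = (\<Sum>c\<in>S. w3 T x y c + w3 T x c y)"

lemma cv_remove:
  assumes S: "finite S" "x \<in> S" "y \<in> S" "x \<noteq> y" and irr: "\<forall>a\<in>S. \<not> T a a"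
  shows "cv T S x = cv T (S - {y}) x + ev T S x y"
proof -
  let ?S = "S - {y}"
  have "cv T S x = (\<Sum>c\<in>S. w3 T x y c) + (\<Sum>b\<in>?S. \<Sum>c\<in>S. w3 T x b c)"
    unfolding cv_def by (rule sum_remove'[OF S(1,3)])
  also have "(\<Sum>b\<in>?S. \<Sum>c\<in>S. w3 T x b c) = (\<Sum>b\<in>?S. w3 T x b y) + cv T ?S x"
    unfolding cv_def
    by (subst sum.distrib[symmetric], rule sum.cong[OF refl], rule sum_remove'[OF S(1,3)])
  also have "(\<Sum>b\<in>?S. w3 T x b y) = (\<Sum>b\<in>S. w3 T x b y)"
    using S irr sum_remove'[OF S(1,3), of "\<lambda>b. w3 T x b y"] by (simp add: w3_irr)
  finally show ?thesis unfolding ev_def sum.distrib by simp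
qed

lemma det_0: "A \<in> carrier_mat 0 0 \<Longrightarrow> det A = 1"
  by (simp add: det_def')

lemma det_1: assumes "A \<in> carrier_mat 1 1" shows "det A = A $$ (0,0)"
proof -
  have "det A = (\<Sum>i<1. A $$ (i,0) * cofactor A i 0)" by (rule laplace_expansion_column[OF assms]) simp
  also have "det (mat_delete A 0 0) = 1" by (rule det_0, insert mat_delete_carrier[OF assms, of 0 0], simp)
  hence "(\<Sum>i<1. A $$ (i,0) * cofactor A i 0) = A $$ (0,0)" by (simp add: cofactor_def)
  finally show ?thesis .
qed

lemma det_2: assumes A: "A \<in> carrier_mat 2 2" shows "det A = A $$ (0,0) * A $$ (1,1) - A $$ (0,1) * A $$ (1,0)"
proof -
  have "det A = (\<Sum>i<2. A $$ (i,0) * cofactor A i 0)" by (rule laplace_expansion_column[OF A]) simp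
  also have "\<dots> = A $$ (0,0) * cofactor A 0 0 + A $$ (1,0) * cofactor A 1 0"
    by (simp add: numeral_2_eq_2)
  also have "cofactor A 0 0 = A $$ (1,1)" unfolding cofactor_def
    using A mat_delete_carrier[OF A, of 0 0] by (simp add: det_1 mat_delete_def)
  also have "cofactor A 1 0 = - A $$ (0,1)" unfolding cofactor_def
    using A mat_delete_carrier[OF A, of 1 0] by (simp add: det_1 mat_delete_def)
  finally show ?thesis by (simp add: algebra_simps)
qed

lemma det_3: assumes A: "A \<in> carrier_mat 3 3" shows "det A =
   A $$ (0,0) * (A $$ (1,1) * A $$ (2,2) - A $$ (1,2) * A $$ (2,1))
 - A $$ (1,0) * (A $$ (0,1) * A $$ (2,2) - A $$ (0,2) * A $$ (2,1))
 + A $$ (2,0) * (A $$ (0,1) * A $$ (1,2) - A $$ (0,2) * A $$ (1,1))"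
proof -
  have "det A = (\<Sum>i<3. A $$ (i,0) * cofactor A i 0)" by (rule laplace_expansion_column[OF A]) simp
  also have "\<dots> = A $$ (0,0) * cofactor A 0 0 + A $$ (1,0) * cofactor A 1 0 + A $$ (2,0) * cofactor A 2 0"
    by (simp add: lessThan_nat_numeral)
  also have "cofactor A 0 0 = A $$ (1,1) * A $$ (2,2) - A $$ (1,2) * A $$ (2,1)" unfolding cofactor_def
    using A mat_delete_carrier[OF A, of 0 0] by (simp add: det_2 mat_delete_def numeral_2_eq_2)
  also have "cofactor A 1 0 = - (A $$ (0,1) * A $$ (2,2) - A $$ (0,2) * A $$ (2,1))" unfolding cofactor_def
    using A mat_delete_carrier[OF A, of 1 0] by (simp add: det_2 mat_delete_def numeral_2_eq_2)
  also have "cofactor A 2 0 = A $$ (0,1) * A $$ (1,2) - A $$ (0,2) * A $$ (1,1)" unfolding cofactor_def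
    using A mat_delete_carrier[OF A, of 2 0] by (simp add: det_2 mat_delete_def numeral_2_eq_2)
  finally show ?thesis by (simp add: algebra_simps)
qed

definition zmat :: "nat \<Rightarrow> real \<Rightarrow> real mat \<Rightarrow> real mat" where
  "zmat k z A = mat k k (\<lambda>(i,j). (if i = j then z else 0) - A $$ (i,j))"

lemma zmat_carrier[simp]: "zmat k z A \<in> carrier_mat k k" unfolding zmat_def by simp

lemma poly_char_poly: assumes A: "(A :: real mat) \<in> carrier_mat k k"
  shows "poly (char_poly A) z = det (zmat k z A)"
proof -
  have "- char_matrix A z = zmat k z A"
    using A by (intro eq_matI) (auto simp: char_matrix_def zmat_def)
  thus ?thesis using char_poly_matrix[OF A] by simp
qed

lemma zmat_delete: assumes "A \<in> carrier_mat (Suc k) (Suc k)" "x < Suc k"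
  shows "zmat k z (mat_delete A x x) = mat_delete (zmat (Suc k) z A) x x"
  using assms by (intro eq_matI) (auto simp: zmat_def mat_delete_def)

lemma coeff_base:
  assumes T: "tournament 3 T"
  shows "coeff (char_poly (adj_mat 3 T)) 0 = - CC T {0..<3} / 3"
proof -
  have "coeff (char_poly (adj_mat 3 T)) 0 = poly (char_poly (adj_mat 3 T)) 0"
    by (simp add: poly_0_coeff_0)
  also have "\<dots> = det (zmat 3 0 (adj_mat 3 T))" by (rule poly_char_poly) simp
  also have "\<dots> = - CC T {0..<3} / 3"
  proof -
    have t: "\<not> T 0 0" "\<not> T 1 1" "\<not> T 2 2" "T 1 0 \<longleftrightarrow> \<not> T 0 1" "T 2 0 \<longleftrightarrow> \<not> T 0 2" "T 2 1 \<longleftrightarrow> \<not> T 1 2"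
    proof -
      have h1: "\<And>u. u < 3 \<Longrightarrow> \<not> T u u" and h2: "\<And>u v. u < 3 \<Longrightarrow> v < 3 \<Longrightarrow> u \<noteq> v \<Longrightarrow> T v u \<longleftrightarrow> \<not> T u v"
        using T unfolding tournament_def by blast+
      show "\<not> T 0 0" "\<not> T 1 1" "\<not> T 2 2" "T 1 0 \<longleftrightarrow> \<not> T 0 1" "T 2 0 \<longleftrightarrow> \<not> T 0 2" "T 2 1 \<longleftrightarrow> \<not> T 1 2"
        using h1[of 0] h1[of 1] h1[of 2] h2[of 0 1] h2[of 0 2] h2[of 1 2] by auto
    qed
    have s: "{0..<3::nat} = {0,1,2}" by auto
    have c: "w3 T (Suc 0) 2 0 = w3 T 0 (Suc 0) 2" "w3 T 2 0 (Suc 0) = w3 T 0 (Suc 0) 2" "w3 T 2 (Suc 0) 0 = w3 T 0 2 (Suc 0)" "w3 T (Suc 0) 0 2 = w3 T 0 2 (Suc 0)"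
      by (metis w3_cyc)+
    have "CC T {0..<3} = 3 * (w3 T 0 1 2 + w3 T 0 2 1)"
      unfolding CC_def s using t(1-3) by (simp add: w3_irr c)
    moreover have "det (zmat 3 0 (adj_mat 3 T)) = - (w3 T 0 1 2 + w3 T 0 2 1)"
      apply (subst det_3[OF zmat_carrier])
      apply (simp add: zmat_def w3_def numeral_2_eq_2[symmetric])
      using t by (cases "T 0 1"; cases "T 1 2"; cases "T 0 2") simp_all
    ultimately show ?thesis by simp
  qed
  finally show ?thesis .
qed

lemma CC_sh_sum:
  assumes T: "tournament (Suc k) T"
  shows "(\<Sum>i<Suc k. CC (\<lambda>a b. T (sh i a) (sh i b)) {0..<k}) = (real k - 2) * CC T {0..<Suc k}"
proof -
  have irr: "\<forall>a\<in>{0..<Suc k}. \<not> T a a" using T unfolding tournament_def by auto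
  have "(\<Sum>i<Suc k. CC (\<lambda>a b. T (sh i a) (sh i b)) {0..<k}) =
        (\<Sum>i<Suc k. CC T {0..<Suc k} - 3 * cv T {0..<Suc k} i)"
  proof (rule sum.cong[OF refl])
    fix i assume i: "i \<in> {..<Suc k}"
    have "CC (\<lambda>a b. T (sh i a) (sh i b)) {0..<k} = CC T (sh i ` {0..<k})"
      by (rule CC_reindex) (meson inj_on_subset sh_inj subset_UNIV)
    also have "\<dots> = CC T ({0..<Suc k} - {i})" using i by (simp add: sh_image)
    also have "\<dots> = CC T {0..<Suc k} - 3 * cv T {0..<Suc k} i"
      using CC_remove[of "{0..<Suc k}" i T] i irr by simp
    finally show "CC (\<lambda>a b. T (sh i a) (sh i b)) {0..<k} = CC T {0..<Suc k} - 3 * cv T {0..<Suc k} i" .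
  qed
  also have "\<dots> = real (Suc k) * CC T {0..<Suc k} - 3 * CC T {0..<Suc k}"
    by (simp add: sum_subtractf sum_distrib_left[symmetric] cv_sum[symmetric] atLeast0LessThan)
  finally show ?thesis by (simp add: algebra_simps)
qed

lemma coeff_cyc:
  assumes "3 \<le> k" "tournament k T"
  shows "coeff (char_poly (adj_mat k T)) (k - 3) = - CC T {0..<k} / 3"
  using assms
proof (induction k arbitrary: T rule: nat_induct_at_least)
  case base
  then show ?case using coeff_base by simp
next
  case (Suc k)
  let ?A = "adj_mat (Suc k) T"
  let ?p = "char_poly ?A"
  have "pderiv ?p = (\<Sum>i<Suc k. char_poly (mat_delete ?A i i))"
    by (rule pderiv_char_poly) simp
  also have "\<dots> = (\<Sum>i<Suc k. char_poly (adj_mat k (\<lambda>a b. T (sh i a) (sh i b))))"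
    by (simp add: mat_delete_adj)
  finally have "coeff (pderiv ?p) (k - 3) = (\<Sum>i<Suc k. coeff (char_poly (adj_mat k (\<lambda>a b. T (sh i a) (sh i b)))) (k - 3))"
    by (simp add: coeff_sum)
  also have "\<dots> = (\<Sum>i<Suc k. - CC (\<lambda>a b. T (sh i a) (sh i b)) {0..<k} / 3)"
    using Suc.IH tournament_sh[OF Suc.prems] by simp
  also have "\<dots> = - (real k - 2) * CC T {0..<Suc k} / 3"
    using CC_sh_sum[OF Suc.prems] unfolding sum_negf sum_divide_distrib[symmetric] by (simp del: sum.lessThan_Suc add: algebra_simps)
  finally have eq: "real (Suc (k - 3)) * coeff ?p (Suc (k - 3)) = - (real k - 2) * CC T {0..<Suc k} / 3"
    by (simp add: coeff_pderiv)
  have "Suc (k - 3) = Suc k - 3" "real (Suc (k - 3)) = real k - 2" using Suc.hyps by auto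
  with eq have "(real k - 2) * (coeff ?p (Suc k - 3) + CC T {0..<Suc k} / 3) = 0"
    by (simp add: field_simps)
  moreover have "real k - 2 \<noteq> 0" using Suc.hyps by simp
  ultimately show ?case by simp
qed

section \<open>Principal submatrices as double deletions\<close>

lemma pick_eq:
  assumes mono: "\<And>i j. i < j \<Longrightarrow> j < k \<Longrightarrow> f i < f j" and img: "f ` {0..<k} = I"
  shows "i < k \<Longrightarrow> pick I i = f i"
proof (induction i)
  case 0
  have "f 0 \<in> I" using img 0 by auto
  moreover have "\<forall>a\<in>I. f 0 \<le> a"
  proof
    fix a assume "a \<in> I"
    then obtain j where "j < k" "a = f j" using img by auto
    then show "f 0 \<le> a" using mono[of 0 j] by (cases "j = 0") auto
  qed
  ultimately show ?case by (simp add: Least_equality)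
next
  case (Suc i)
  have IH: "pick I i = f i" using Suc by simp
  have "f (Suc i) \<in> I \<and> f (Suc i) > f i" using img Suc.prems mono[of i "Suc i"] by auto
  moreover have "\<forall>a. a \<in> I \<and> a > f i \<longrightarrow> f (Suc i) \<le> a"
  proof (intro allI impI)
    fix a assume a: "a \<in> I \<and> a > f i"
    then obtain j where j: "j < k" "a = f j" using img by auto
    have "j > i"
    proof (rule ccontr)
      assume "\<not> i < j"
      then have "j = i \<or> j < i" by auto
      then show False using mono[of j i] Suc.prems j a by auto
    qed
    then show "f (Suc i) \<le> a" using mono[of "Suc i" j] j by (cases "j = Suc i") auto
  qed
  ultimately show ?case unfolding pick.simps IH by (intro Least_equality) auto
qed

lemma card_n2_form:
  assumes "I \<subseteq> {0..<n}" "card I = n - 2" "n \<ge> 2"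
  shows "\<exists>x y. x < y \<and> y < n \<and> I = {0..<n} - {x, y}"
proof -
  have "card ({0..<n} - I) = 2" using assms by (simp add: card_Diff_subset finite_subset)
  then obtain x y where xy: "{0..<n} - I = {x, y}" "x \<noteq> y" by (auto simp: card_2_iff)
  have I: "I = {0..<n} - {x, y}" using xy assms(1) by auto
  have "x < n" "y < n" using xy by auto
  show ?thesis
  proof (cases "x < y")
    case True then show ?thesis using I \<open>y < n\<close> by blast
  next
    case False then have "y < x" using xy by auto
    then show ?thesis using I \<open>x < n\<close> by (metis insert_commute)
  qed
qed

lemma principal_double_delete:
  assumes A: "A \<in> carrier_mat n n" and xy: "x < y" "y < n"
  shows "principal_submatrix A ({0..<n} - {x, y}) = mat_delete (mat_delete A y y) x x"
proof -
  let ?I = "{0..<n} - {x, y}"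
  let ?f = "\<lambda>i. sh y (sh x i)"
  have mono: "\<And>i j. i < j \<Longrightarrow> j < n - 2 \<Longrightarrow> ?f i < ?f j" unfolding sh_def by auto
  have "sh x ` {0..<n-2} = {0..<n-1} - {x}" using sh_image[of x "n-2"] xy by (simp add: Suc_diff_Suc numeral_2_eq_2)
  hence "?f ` {0..<n-2} = sh y ` ({0..<n-1} - {x})" by (simp add: image_image[symmetric])
  also have "\<dots> = sh y ` {0..<n-1} - {sh y x}" using image_set_diff[OF sh_inj, of y "{0..<n-1}" "{x}"] by simp
  also have "\<dots> = ?I" using sh_image[of y "n-1"] xy by (auto simp: sh_def)
  finally have img: "?f ` {0..<n-2} = ?I" .
  have cI: "card {i. i < n \<and> i \<in> ?I} = n - 2"
  proof -
    have "{i. i < n \<and> i \<in> ?I} = ?I" by auto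
    thus ?thesis using xy by (simp add: card_Diff_subset)
  qed
  show ?thesis unfolding principal_submatrix_def
  proof (rule eq_matI)
    show "dim_row (submatrix A ?I ?I) = dim_row (mat_delete (mat_delete A y y) x x)"
      using A cI by (simp add: dim_submatrix)
    show "dim_col (submatrix A ?I ?I) = dim_col (mat_delete (mat_delete A y y) x x)"
      using A cI by (simp add: dim_submatrix)
    fix i j assume ij: "i < dim_row (mat_delete (mat_delete A y y) x x)" "j < dim_col (mat_delete (mat_delete A y y) x x)"
    hence ij': "i < n - 2" "j < n - 2" using A by auto
    have "submatrix A ?I ?I $$ (i, j) = A $$ (pick ?I i, pick ?I j)"
      by (rule submatrix_index) (use A cI ij' in auto)
    also have "\<dots> = A $$ (?f i, ?f j)" using pick_eq[OF mono img] ij' by simp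
    also have "\<dots> = mat_delete (mat_delete A y y) x x $$ (i, j)"
      using A ij' xy by (simp add: mat_delete_def sh_def)
    finally show "submatrix A ?I ?I $$ (i, j) = mat_delete (mat_delete A y y) x x $$ (i, j)" .
  qed
qed

section \<open>Combinatorial core of the hard direction\<close>

lemma ev_swap: "ev T S x y = ev T S y x"
  unfolding ev_def by (intro sum.cong[OF refl]) (metis add.commute w3_cyc)

lemma w3_nonneg: "w3 T a b c \<ge> 0" unfolding w3_def by simp

lemma CC_pair:
  assumes T: "tournament n T" and xy: "x < n" "y < n" "x \<noteq> y"
  shows "CC T ({0..<n} - {x, y}) = CC T {0..<n} - 3 * cv T {0..<n} x - 3 * cv T {0..<n} y + 3 * ev T {0..<n} y x"
proof -
  let ?V = "{0..<n}"
  have irr: "\<forall>a\<in>?V. \<not> T a a" using T unfolding tournament_def by auto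
  have "CC T ?V = CC T (?V - {x}) + 3 * cv T ?V x" using CC_remove[of ?V x T] xy irr by simp
  moreover have "CC T (?V - {x}) = CC T (?V - {x} - {y}) + 3 * cv T (?V - {x}) y"
    using CC_remove[of "?V - {x}" y T] xy irr by simp
  moreover have "cv T ?V y = cv T (?V - {x}) y + ev T ?V y x"
    using cv_remove[of ?V y x T] xy irr by simp
  moreover have "?V - {x} - {y} = ?V - {x, y}" by auto
  ultimately show ?thesis by simp
qed

lemma ev_diag: assumes "\<not> T x x" shows "ev T S x x = 0"
  unfolding ev_def using assms by (simp add: w3_irr)

lemma sum_ev: "(\<Sum>y\<in>S. ev T S y x) = 2 * cv T S x"
proof -
  have "(\<Sum>y\<in>S. ev T S y x) = (\<Sum>y\<in>S. \<Sum>c\<in>S. w3 T x c y + w3 T x y c)"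
    unfolding ev_def by (intro sum.cong[OF refl]) (metis w3_cyc)
  also have "\<dots> = (\<Sum>y\<in>S. \<Sum>c\<in>S. w3 T x c y) + cv T S x"
    unfolding cv_def by (simp add: sum.distrib)
  also have "(\<Sum>y\<in>S. \<Sum>c\<in>S. w3 T x c y) = cv T S x" unfolding cv_def by (rule sum.swap)
  finally show ?thesis by simp
qed

lemma real_card_filter: "real (card {z. z < (n::nat) \<and> P z}) = (\<Sum>z<n. of_bool (P z))"
proof -
  have "{..<n} \<inter> {z. P z} = {z. z < n \<and> P z}" by auto
  moreover have "(\<Sum>z<n. (of_bool (P z) :: real)) = of_nat (card ({..<n} \<inter> {z. P z}))"
    by (rule sum_of_bool_eq) auto
  ultimately show ?thesis by simp
qed

lemma hard_comb:
  assumes n: "n \<ge> 5" and T: "tournament n T"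
    and const: "\<And>x y. x < n \<Longrightarrow> y < n \<Longrightarrow> x \<noteq> y \<Longrightarrow> CC T ({0..<n} - {x, y}) = CC T ({0..<n} - {0, 1})"
  shows "transitive_tournament n T \<or> doubly_regular n T"
proof -
  let ?V = "{0..<n}"
  define C where "C = CC T ?V"
  define K where "K = CC T (?V - {0, 1})"
  define c where "c = cv T ?V"
  define e where "e = ev T ?V"
  have irr: "\<And>a. a < n \<Longrightarrow> \<not> T a a" using T unfolding tournament_def by auto
  have tor: "\<And>a b. a < n \<Longrightarrow> b < n \<Longrightarrow> a \<noteq> b \<Longrightarrow> T a b \<longleftrightarrow> \<not> T b a"
    using T unfolding tournament_def by blast
  have key: "c x + c y - e y x = (C - K) / 3" if "x < n" "y < n" "x \<noteq> y" for x y
    using CC_pair[OF T that] const[OF that] unfolding C_def K_def c_def e_def by simp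
  have cconst: "c x = ((real n - 1) * ((C - K) / 3) - C) / (real n - 4)" if x: "x < n" for x
  proof -
    have "(\<Sum>y\<in>?V - {x}. c x + c y - e y x) = (\<Sum>y\<in>?V - {x}. (C - K) / 3)"
      using key x by (intro sum.cong[OF refl]) auto
    also have "\<dots> = (real n - 1) * ((C - K) / 3)" using x by (simp add: card_Diff_subset)
    finally have eq1: "(\<Sum>y\<in>?V - {x}. c x + c y - e y x) = (real n - 1) * ((C - K) / 3)" .
    have s1: "(\<Sum>y\<in>?V - {x}. c y) = C - c x"
      using sum_remove'[of ?V x c] x cv_sum[of T ?V] unfolding c_def C_def by simp
    have s2: "(\<Sum>y\<in>?V - {x}. e y x) = 2 * c x"
      using sum_remove'[of ?V x "\<lambda>y. e y x"] x sum_ev[of T ?V x] ev_diag[of T x ?V] irr[OF x]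
      unfolding c_def e_def by simp
    have "(\<Sum>y\<in>?V - {x}. c x + c y - e y x) = (real n - 1) * c x + (C - c x) - 2 * c x"
      using x s1 s2 by (simp add: sum.distrib sum_subtractf card_Diff_subset)
    with eq1 have "(real n - 4) * c x = (real n - 1) * ((C - K) / 3) - C" by (simp add: algebra_simps)
    moreover have "real n - 4 \<noteq> 0" using n by simp
    ultimately show ?thesis by (simp add: field_simps)
  qed
  define E where "E = 2 * c 0 - (C - K) / 3"
  have econst: "e y x = E" if "x < n" "y < n" "x \<noteq> y" for x y
  proof -
    have "c x = c 0" "c y = c 0" using cconst[OF that(1)] cconst[OF that(2)] cconst[of 0] n by simp_all
    thus ?thesis using key[OF that] unfolding E_def by linarith
  qed
  show ?thesis
  proof (cases "E = 0")
    case True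
    have "transitive_tournament n T" unfolding transitive_tournament_def
    proof (intro allI impI)
      fix u v w assume uvw: "u < n" "v < n" "w < n" "T u v \<and> T v w"
      have "u \<noteq> v" "v \<noteq> w" using uvw irr by auto
      have "u \<noteq> w" using uvw tor[of v w] \<open>v \<noteq> w\<close> by auto
      show "T u w"
      proof (rule ccontr)
        assume "\<not> T u w"
        hence "T w u" using tor[of u w] uvw \<open>u \<noteq> w\<close> by auto
        hence "w3 T u v w = 1" using uvw unfolding w3_def by simp
        moreover have "w3 T u v w \<le> e u v"
        proof -
          have "w3 T u v w + w3 T u w v \<le> e u v" unfolding e_def ev_def
            by (rule member_le_sum[of w]) (use uvw in \<open>auto intro: add_nonneg_nonneg w3_nonneg\<close>)
          thus ?thesis using w3_nonneg[of T u w v] by linarith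
        qed
        moreover have "e u v = 0" using econst[of v u] uvw \<open>u \<noteq> v\<close> True by simp
        ultimately show False by simp
      qed
    qed
    thus ?thesis ..
  next
    case False
    define Dg where "Dg = c 0 / E"
    have inner: "(\<Sum>cc\<in>?V. w3 T x b cc) = (if T x b then E else 0)" if xb: "x < n" "b < n" for x b
    proof (cases "T x b")
      case True
      hence "x \<noteq> b" using irr xb by auto
      have nb: "\<not> T b x" using True tor[OF xb] \<open>x \<noteq> b\<close> by simp
      have z: "(\<Sum>cc\<in>?V. w3 T x cc b) = 0" by (rule sum.neutral) (use nb in \<open>simp add: w3_def\<close>)
      have "e x b = (\<Sum>cc\<in>?V. w3 T x b cc) + (\<Sum>cc\<in>?V. w3 T x cc b)"
        unfolding e_def ev_def by (rule sum.distrib)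
      hence "(\<Sum>cc\<in>?V. w3 T x b cc) = e x b" using z by simp
      thus ?thesis using econst[of b x] xb True \<open>x \<noteq> b\<close> by simp
    next
      case False thus ?thesis by (simp add: w3_def)
    qed
    have outdeg: "(\<Sum>b<n. of_bool (T x b)) = Dg" if x: "x < n" for x
    proof -
      have "c x = (\<Sum>b\<in>?V. if T x b then E else 0)"
        unfolding c_def cv_def using inner x by (intro sum.cong[OF refl]) auto
      also have "\<dots> = (\<Sum>b<n. E * of_bool (T x b))"
        unfolding atLeast0LessThan by (rule sum.cong[OF refl]) simp
      also have "\<dots> = E * (\<Sum>b<n. of_bool (T x b))"
        by (rule sum_distrib_left[symmetric])
      finally have "c x = E * (\<Sum>b<n. of_bool (T x b))" .
      moreover have "c x = c 0" using cconst[OF x] cconst[of 0] n by simp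
      ultimately show ?thesis unfolding Dg_def using False by (simp add: field_simps)
    qed
    have common1: "(\<Sum>z<n. of_bool (T x z \<and> T y z)) = Dg - E" if xy: "x < n" "y < n" "T x y" for x y
    proof -
      have "x \<noteq> y" using xy irr by auto
      have "(\<Sum>z<n. of_bool (T y z)) = (\<Sum>z<n. of_bool (T x z \<and> T y z) + w3 T x y z)"
      proof (rule sum.cong[OF refl])
        fix z assume z: "z \<in> {..<n}"
        show "of_bool (T y z) = of_bool (T x z \<and> T y z) + w3 T x y z"
        proof (cases "z = x")
          case True thus ?thesis using xy tor[of x y] \<open>x \<noteq> y\<close> by (simp add: w3_def)
        next
          case False thus ?thesis using xy z tor[of x z] by (auto simp: w3_def)
        qed
      qed
      also have "\<dots> = (\<Sum>z<n. of_bool (T x z \<and> T y z)) + E"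
        using inner[of x y] xy by (simp add: sum.distrib atLeast0LessThan)
      finally show ?thesis using outdeg[OF xy(2)] by simp
    qed
    have common: "real (card {z. z < n \<and> T x z \<and> T y z}) = Dg - E" if xy: "x < n" "y < n" "x \<noteq> y" for x y
    proof (cases "T x y")
      case True thus ?thesis using common1 xy by (simp add: real_card_filter)
    next
      case False
      hence "T y x" using tor[of x y] xy by auto
      hence "(\<Sum>z<n. of_bool (T y z \<and> T x z)) = Dg - E" using common1 xy by simp
      thus ?thesis by (simp add: real_card_filter conj_commute)
    qed
    have "doubly_regular n T" unfolding doubly_regular_def
    proof (intro exI allI impI)
      fix x y assume "x < n" "y < n" "x \<noteq> y"
      hence "real (card {z. z < n \<and> T x z \<and> T y z}) = real (card {z. z < n \<and> T 0 z \<and> T 1 z})"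
        using common[of x y] common[of 0 1] n by simp
      thus "card {z. z < n \<and> T x z \<and> T y z} = card {z. z < n \<and> T 0 z \<and> T 1 z}" by linarith
    qed
    thus ?thesis ..
  qed
qed

lemma img_double: assumes xy: "x < y" "y < n"
  shows "(\<lambda>i. sh y (sh x i)) ` {0..<n-2} = {0..<n} - {x, y}"
proof -
  have "sh x ` {0..<n-2} = {0..<n-1} - {x}" using sh_image[of x "n-2"] xy by (simp add: Suc_diff_Suc numeral_2_eq_2)
  hence "(\<lambda>i. sh y (sh x i)) ` {0..<n-2} = sh y ` ({0..<n-1} - {x})" by (simp add: image_image[symmetric])
  also have "\<dots> = sh y ` {0..<n-1} - {sh y x}" using image_set_diff[OF sh_inj, of y "{0..<n-1}" "{x}"] by simp
  also have "\<dots> = {0..<n} - {x, y}" using sh_image[of y "n-1"] xy by (auto simp: sh_def)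
  finally show ?thesis .
qed

lemma inj_double: "inj (\<lambda>i. sh y (sh x i))"
  using sh_inj[of x] sh_inj[of y] unfolding inj_def by blast

lemma tournament_comp:
  assumes T: "tournament n T" and f: "inj f" "\<And>i. i < k \<Longrightarrow> f i < n"
  shows "tournament k (\<lambda>i j. T (f i) (f j))"
  using T f unfolding tournament_def inj_def by metis

lemma double_delete_adj: assumes "x < y" "y < n"
  shows "mat_delete (mat_delete (adj_mat n T) y y) x x = adj_mat (n-2) (\<lambda>i j. T (sh y (sh x i)) (sh y (sh x j)))"
  using assms by (intro eq_matI) (auto simp: mat_delete_def sh_def)

lemma CC_coeff:
  assumes n: "n \<ge> 5" and T: "tournament n T" and xy: "x < y" "y < n"
  shows "CC T ({0..<n} - {x, y}) = - 3 * coeff (char_poly (principal_submatrix (adj_mat n T) ({0..<n} - {x, y}))) (n - 5)"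
proof -
  let ?f = "\<lambda>i. sh y (sh x i)"
  have fb: "?f i < n" if "i < n - 2" for i
  proof -
    have "?f i \<in> ?f ` {0..<n-2}" using that by auto
    thus ?thesis unfolding img_double[OF xy] by auto
  qed
  have T': "tournament (n-2) (\<lambda>i j. T (?f i) (?f j))" by (rule tournament_comp[OF T inj_double fb])
  have "principal_submatrix (adj_mat n T) ({0..<n} - {x, y}) = adj_mat (n-2) (\<lambda>i j. T (?f i) (?f j))"
    using principal_double_delete[OF adj_mat_carrier xy] double_delete_adj[OF xy] by simp
  moreover have "coeff (char_poly (adj_mat (n-2) (\<lambda>i j. T (?f i) (?f j)))) (n - 2 - 3) = - CC (\<lambda>i j. T (?f i) (?f j)) {0..<n-2} / 3"
    by (rule coeff_cyc) (use n T' in auto)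
  moreover have "CC (\<lambda>i j. T (?f i) (?f j)) {0..<n-2} = CC T ({0..<n} - {x, y})"
    using CC_reindex[of ?f "{0..<n-2}" T] inj_on_subset[OF inj_double[of y x], of "{0..<n-2}"] img_double[OF xy] by simp
  moreover have "n - 2 - 3 = n - 5" by simp
  ultimately show ?thesis by simp
qed

lemma hard_direction:
  assumes n: "n \<ge> 5" and T: "tournament n T" and sm: "spectrally_monomorphic (n - 2) (adj_mat n T)"
  shows "transitive_tournament n T \<or> doubly_regular n T"
proof (rule hard_comb[OF n T])
  have gen: "CC T ({0..<n} - {x, y}) = CC T ({0..<n} - {0, 1})" if xy: "x < y" "y < n" for x y
  proof -
    have c1: "card ({0..<n} - {x, y}) = n - 2" using xy by (simp add: card_Diff_subset)
    have c2: "card ({0..<n} - {0, 1}) = n - 2" using n by (simp add: card_Diff_subset)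
    have "char_poly (principal_submatrix (adj_mat n T) ({0..<n} - {x, y})) =
          char_poly (principal_submatrix (adj_mat n T) ({0..<n} - {0, 1}))"
      using sm c1 c2 unfolding spectrally_monomorphic_def by auto
    thus ?thesis using CC_coeff[OF n T xy] CC_coeff[OF n T, of 0 1] n by simp
  qed
  fix x y assume "x < n" "y < n" "x \<noteq> y"
  then show "CC T ({0..<n} - {x, y}) = CC T ({0..<n} - {0, 1})"
    using gen[of x y] gen[of y x] by (cases "x < y") (auto simp: insert_commute)
qed

section \<open>Transitive tournaments\<close>

lemma transitive_sh: assumes "transitive_tournament (Suc N) T"
  shows "transitive_tournament N (\<lambda>i j. T (sh x i) (sh x j))"
  using assms sh_lt[of _ N x] unfolding transitive_tournament_def by blast

lemma sink_exists:
  assumes T: "tournament N T" and tr: "transitive_tournament N T" and N: "N > 0"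
  shows "\<exists>s<N. \<forall>j<N. \<not> T s j"
proof -
  define out where "out s = {j. j < N \<and> T s j}" for s
  define m where "m = Min ((\<lambda>s. card (out s)) ` {0..<N})"
  have "m \<in> (\<lambda>s. card (out s)) ` {0..<N}" unfolding m_def using N by (intro Min_in) auto
  then obtain s where s: "s < N" "card (out s) = m" by auto
  have mle: "m \<le> card (out t)" if "t < N" for t unfolding m_def using that by (intro Min_le) auto
  show ?thesis
  proof (intro exI[of _ s] conjI allI impI)
    show "s < N" by fact
    fix j assume j: "j < N"
    show "\<not> T s j"
    proof
      assume sj: "T s j"
      have "out j \<subset> out s"
      proof
        show "out j \<subseteq> out s" unfolding out_def using tr sj s j unfolding transitive_tournament_def by blast
        have "j \<in> out s" "j \<notin> out j" unfolding out_def using sj j T unfolding tournament_def by auto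
        thus "out j \<noteq> out s" by blast
      qed
      moreover have "finite (out s)" by (simp add: out_def)
      ultimately have "card (out j) < card (out s)" using psubset_card_mono by blast
      thus False using mle[OF j] s by simp
    qed
  qed
qed

lemma det_zero_row: assumes A: "(A :: 'a :: comm_ring_1 mat) \<in> carrier_mat N N" and s: "s < N"
  and z: "\<And>j. j < N \<Longrightarrow> A $$ (s, j) = 0" shows "det A = 0"
  using laplace_expansion_row[OF A s] z by simp

lemma char_poly_0: "char_poly (A :: 'a :: comm_ring_1 mat) = 1" if "A \<in> carrier_mat 0 0"
  using that unfolding char_poly_def by (simp add: det_def' char_poly_matrix_def)

lemma trans_charpoly:
  assumes "tournament k T" "transitive_tournament k T"
  shows "char_poly (adj_mat k T) = monom 1 k"
  using assms
proof (induction k arbitrary: T)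
  case 0
  then show ?case by (simp add: char_poly_0)
next
  case (Suc k)
  let ?A = "adj_mat (Suc k) T"
  let ?p = "char_poly ?A"
  have "pderiv ?p = (\<Sum>i<Suc k. char_poly (mat_delete ?A i i))"
    by (rule pderiv_char_poly) simp
  also have "\<dots> = (\<Sum>i<Suc k. monom 1 k)"
    using Suc.IH tournament_sh[OF Suc.prems(1)] transitive_sh[OF Suc.prems(2)] by (simp add: mat_delete_adj)
  also have "\<dots> = pderiv (monom 1 (Suc k))"
  proof -
    have "(\<Sum>i<m. monom (1::real) k) = monom (of_nat m) k" for m
      by (simp add: of_nat_poly smult_monom)
    from this[of "Suc k"] show ?thesis by (simp add: pderiv_monom del: of_nat_Suc)
  qed
  finally have "pderiv (?p - monom 1 (Suc k)) = 0" by (simp add: pderiv_diff)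
  then obtain h where h: "?p - monom 1 (Suc k) = [:h:]" using pderiv_iszero by blast
  have "h = coeff (?p - monom 1 (Suc k)) 0" using h by simp
  also have "\<dots> = poly ?p 0" by (simp add: poly_0_coeff_0)
  also have "\<dots> = det (zmat (Suc k) 0 ?A)" by (rule poly_char_poly) simp
  also have "\<dots> = 0"
  proof -
    obtain s where s: "s < Suc k" "\<forall>j<Suc k. \<not> T s j" using sink_exists[OF Suc.prems] by auto
    show ?thesis by (rule det_zero_row[OF zmat_carrier s(1)]) (use s in \<open>auto simp: zmat_def\<close>)
  qed
  finally show ?case using h by simp
qed

section \<open>Doubly regular tournaments: degrees\<close>

lemma arcs_count:
  assumes T: "tournament n T" and S: "S \<subseteq> {0..<n}"
  shows "(\<Sum>y\<in>S. \<Sum>z\<in>S. (of_bool (T y z) :: real)) = real (card S) * (real (card S) - 1) / 2"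
proof -
  have fin: "finite S" using S finite_subset by blast
  have "(\<Sum>y\<in>S. \<Sum>z\<in>S. (of_bool (T y z) :: real)) + (\<Sum>y\<in>S. \<Sum>z\<in>S. (of_bool (T z y) :: real))
      = (\<Sum>y\<in>S. \<Sum>z\<in>S. (of_bool (y \<noteq> z) :: real))"
    unfolding sum.distrib[symmetric]
  proof (intro sum.cong[OF refl])
    fix y z assume "y \<in> S" "z \<in> S"
    hence "y < n" "z < n" using S by auto
    thus "(of_bool (T y z) :: real) + of_bool (T z y) = of_bool (y \<noteq> z)"
      using T unfolding tournament_def by (cases "y = z") auto
  qed
  also have "\<dots> = (\<Sum>y\<in>S. real (card S) - 1)"
  proof (rule sum.cong[OF refl])
    fix y assume y: "y \<in> S"
    have "(\<Sum>z\<in>S. (of_bool (y \<noteq> z) :: real)) = real (card (S \<inter> {z. y \<noteq> z}))"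
      using fin by simp
    also have "S \<inter> {z. y \<noteq> z} = S - {y}" by auto
    also have "real (card (S - {y})) = real (card S) - 1"
    proof -
      have "card S \<ge> 1" using y fin by (metis One_nat_def Suc_leI card_gt_0_iff empty_iff)
      moreover have "card (S - {y}) = card S - 1" using y fin by simp
      ultimately show ?thesis by (simp add: of_nat_diff)
    qed
    finally show "(\<Sum>z\<in>S. (of_bool (y \<noteq> z) :: real)) = real (card S) - 1" .
  qed
  also have "\<dots> = real (card S) * (real (card S) - 1)" by simp
  finally show ?thesis by (subst (asm) (2) sum.swap) simp
qed

lemma dr_degree:
  assumes n: "n \<ge> 5" and T: "tournament n T"
    and dr: "\<And>x y. x < n \<Longrightarrow> y < n \<Longrightarrow> x \<noteq> y \<Longrightarrow> card {z. z < n \<and> T x z \<and> T y z} = cc"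
  shows "\<And>x. x < n \<Longrightarrow> card {z. z < n \<and> T x z} = 2 * cc + 1" and "n = 4 * cc + 3"
proof -
  define Ou where "Ou x = {z. z < n \<and> T x z}" for x
  have OS: "Ou x \<subseteq> {0..<n}" for x unfolding Ou_def by auto
  have eq: "real (card (Ou x)) * (real (card (Ou x)) - 1) / 2 = real (card (Ou x)) * real cc" if x: "x < n" for x
  proof -
    have "(\<Sum>y\<in>Ou x. \<Sum>z\<in>Ou x. (of_bool (T y z) :: real)) = (\<Sum>y\<in>Ou x. real cc)"
    proof (rule sum.cong[OF refl])
      fix y assume y: "y \<in> Ou x"
      hence "y < n" "x \<noteq> y" using x T unfolding Ou_def tournament_def by auto
      have "(\<Sum>z\<in>Ou x. (of_bool (T y z) :: real)) = real (card (Ou x \<inter> {z. T y z}))"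
        using finite_subset[OF OS] by simp
      also have "Ou x \<inter> {z. T y z} = {z. z < n \<and> T x z \<and> T y z}" unfolding Ou_def by auto
      finally show "(\<Sum>z\<in>Ou x. (of_bool (T y z) :: real)) = real cc" using dr[OF x \<open>y < n\<close> \<open>x \<noteq> y\<close>] by simp
    qed
    thus ?thesis using arcs_count[OF T OS[of x]] by simp
  qed
  have all_pos: "card (Ou x) = 2 * cc + 1" if x: "x < n" and pos: "card (Ou x) > 0" for x
  proof -
    have "real (card (Ou x)) * (real (card (Ou x)) - 1) = real (card (Ou x)) * (2 * real cc)"
    proof -
      have "2 * (real (card (Ou x)) * (real (card (Ou x)) - 1) / 2) = 2 * (real (card (Ou x)) * real cc)"
        using eq[OF x] by (simp only:)
      thus ?thesis by (simp add: algebra_simps)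
    qed
    hence "real (card (Ou x)) - 1 = 2 * real cc" using pos by (subst (asm) mult_left_cancel) auto
    thus ?thesis by linarith
  qed
  have total: "(\<Sum>x<n. real (card (Ou x))) = real n * (real n - 1) / 2"
  proof -
    have "(\<Sum>x<n. real (card (Ou x))) = (\<Sum>x\<in>{0..<n}. \<Sum>z\<in>{0..<n}. (of_bool (T x z) :: real))"
    proof (rule sum.cong)
      show "{..<n} = {0..<n}" by auto
      fix x assume "x \<in> {0..<n}"
      have "(\<Sum>z\<in>{0..<n}. (of_bool (T x z) :: real)) = real (card ({0..<n} \<inter> {z. T x z}))" by simp
      also have "{0..<n} \<inter> {z. T x z} = Ou x" unfolding Ou_def by auto
      finally show "real (card (Ou x)) = (\<Sum>z\<in>{0..<n}. (of_bool (T x z) :: real))" by simp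
    qed
    also have "\<dots> = real n * (real n - 1) / 2" using arcs_count[OF T, of "{0..<n}"] by simp
    finally show ?thesis .
  qed
  have allpos: "card (Ou x) > 0" if x: "x < n" for x
  proof (rule ccontr)
    assume "\<not> card (Ou x) > 0"
    hence O0: "Ou x = {}" using finite_subset[OF OS] by auto
    obtain y where y: "y < n" "y \<noteq> x"
    proof (cases "x = 0")
      case True thus ?thesis using that[of 1] n by simp
    next
      case False thus ?thesis using that[of 0] n by simp
    qed
    have "{z. z < n \<and> T x z \<and> T y z} = {}" using O0 unfolding Ou_def by auto
    hence cc0: "cc = 0" using dr[OF x y(1)] y(2) by auto
    have le1: "card (Ou u) \<le> 1" if "u < n" for u
    proof -
      have "real (card (Ou u)) * (real (card (Ou u)) - 1) = 0" using eq[OF that] cc0 by simp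
      thus ?thesis by (cases "card (Ou u) = 0") auto
    qed
    have "(\<Sum>u<n. real (card (Ou u))) \<le> (\<Sum>u<n. 1)" by (rule sum_mono) (use le1 in auto)
    hence "real n * (real n - 1) / 2 \<le> real n" using total by simp
    hence "real n - 1 \<le> 2" using n by (simp add: field_simps)
    thus False using n by simp
  qed
  show deg: "card {z. z < n \<and> T x z} = 2 * cc + 1" if "x < n" for x
    using all_pos[OF that allpos[OF that]] unfolding Ou_def .
  have "(\<Sum>x<n. real (card (Ou x))) = real n * (2 * real cc + 1)"
    using all_pos allpos by simp
  with total have "real n * (real n - 1) / 2 = real n * (2 * real cc + 1)" by linarith
  hence "real n * ((real n - 1) / 2) = real n * (2 * real cc + 1)" by simp
  hence "(real n - 1) / 2 = 2 * real cc + 1" using n by (subst (asm) mult_left_cancel) auto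
  hence "real n = real (4 * cc + 3)" by (simp add: field_simps)
  thus "n = 4 * cc + 3" by (simp only: of_nat_eq_iff)
qed

lemma dr_sq:
  assumes n: "n \<ge> 5" and T: "tournament n T"
    and dr: "\<And>x y. x < n \<Longrightarrow> y < n \<Longrightarrow> x \<noteq> y \<Longrightarrow> card {z. z < n \<and> T x z \<and> T y z} = cc"
    and ik: "i < n" "k < n" "i \<noteq> k"
  shows "(\<Sum>j<n. (of_bool (T i j \<and> T j k) :: real)) = real cc + 1 - of_bool (T i k)"
proof -
  have deg: "(\<Sum>j<n. (of_bool (T i j) :: real)) = 2 * real cc + 1"
    using dr_degree(1)[OF n T dr ik(1)] real_card_filter[of n "T i"] by simp
  have "(\<Sum>j<n. (of_bool (T i j) :: real)) = (\<Sum>j<n. of_bool (T i j \<and> T k j) + of_bool (T i j \<and> T j k) + of_bool (j = k \<and> T i k))"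
  proof (rule sum.cong[OF refl])
    fix j assume j: "j \<in> {..<n}"
    have irr: "\<not> T k k" using T ik unfolding tournament_def by auto
    show "(of_bool (T i j) :: real) = of_bool (T i j \<and> T k j) + of_bool (T i j \<and> T j k) + of_bool (j = k \<and> T i k)"
    proof (cases "j = k")
      case True thus ?thesis using irr by simp
    next
      case False
      hence "T k j \<longleftrightarrow> \<not> T j k" using T ik j unfolding tournament_def by auto
      thus ?thesis using False by auto
    qed
  qed
  also have "\<dots> = real cc + (\<Sum>j<n. of_bool (T i j \<and> T j k)) + of_bool (T i k)"
  proof -
    have "(\<Sum>j<n. (of_bool (T i j \<and> T k j) :: real)) = real cc"
      using real_card_filter[of n "\<lambda>j. T i j \<and> T k j"] dr[OF ik] by simp
    moreover have "(\<Sum>j<n. (of_bool (j = k \<and> T i k) :: real)) = of_bool (T i k)"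
      using ik by (simp add: sum.delta)
    ultimately show ?thesis by (simp add: sum.distrib)
  qed
  finally show ?thesis using deg by simp
qed

section \<open>Determinants of deleted matrices via inverses\<close>

lemma mult_entry: assumes "A \<in> carrier_mat n n" "B \<in> carrier_mat n n" "i < n" "j < n"
  shows "(A * B) $$ (i,j) = (\<Sum>l<n. A $$ (i,l) * B $$ (l,j))"
  using assms by (simp add: scalar_prod_def atLeast0LessThan)

lemma del1:
  assumes M: "(M :: real mat) \<in> carrier_mat n n" and R: "R \<in> carrier_mat n n"
    and MR: "M * R = 1\<^sub>m n" and x: "x < n"
  shows "det (mat_delete M x x) = det M * R $$ (x,x)"
proof -
  let ?adj = "Determinant.adj_mat M"
  have adjC: "?adj \<in> carrier_mat n n" and adjM: "?adj * M = det M \<cdot>\<^sub>m 1\<^sub>m n"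
    using adj_mat[OF M] by auto
  have "?adj = ?adj * (M * R)" using MR adjC by simp
  also have "\<dots> = (?adj * M) * R" using adjC M R by (simp add: assoc_mult_mat)
  also have "\<dots> = det M \<cdot>\<^sub>m R" unfolding adjM using R by (subst mult_smult_assoc_mat) auto
  finally have "?adj $$ (x,x) = (det M \<cdot>\<^sub>m R) $$ (x,x)" by simp
  moreover have "?adj $$ (x,x) = det (mat_delete M x x)"
    using M x by (simp add: Determinant.adj_mat_def cofactor_def)
  ultimately show ?thesis using R x by simp
qed

definition R1 :: "real mat \<Rightarrow> nat \<Rightarrow> nat \<Rightarrow> real mat" where
  "R1 R N y = mat N N (\<lambda>(i,j). R $$ (sh y i, sh y j) - R $$ (sh y i, y) * R $$ (y, sh y j) / R $$ (y, y))"

lemma del_inverse: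
  assumes M: "(M :: real mat) \<in> carrier_mat (Suc N) (Suc N)" and R: "R \<in> carrier_mat (Suc N) (Suc N)"
    and MR: "M * R = 1\<^sub>m (Suc N)" and y: "y < Suc N" and Ryy: "R $$ (y,y) \<noteq> 0"
  shows "mat_delete M y y * R1 R N y = 1\<^sub>m N"
proof (rule eq_matI)
  show "dim_row (mat_delete M y y * R1 R N y) = dim_row (1\<^sub>m N)" using M by simp
  show "dim_col (mat_delete M y y * R1 R N y) = dim_col (1\<^sub>m N)" by (simp add: R1_def)
  fix i k assume "i < dim_row (1\<^sub>m N)" "k < dim_col (1\<^sub>m N)"
  hence ik: "i < N" "k < N" by auto
  let ?V = "{0..<Suc N}"
  have row: "(\<Sum>j\<in>?V. M $$ (u,j) * R $$ (j,v)) = (if u = v then 1 else 0)" if "u < Suc N" "v < Suc N" for u v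
  proof -
    have "(M * R) $$ (u,v) = (\<Sum>j<Suc N. M $$ (u,j) * R $$ (j,v))" by (rule mult_entry[OF M R that])
    thus ?thesis using MR that by (simp add: atLeast0LessThan)
  qed
  have rowy: "(\<Sum>j\<in>?V - {y}. M $$ (u,j) * R $$ (j,v)) = (if u = v then 1 else 0) - M $$ (u,y) * R $$ (y,v)"
    if "u < Suc N" "v < Suc N" for u v
    using row[OF that] sum_remove'[of ?V y "\<lambda>j. M $$ (u,j) * R $$ (j,v)"] y by simp
  let ?u = "sh y i" and ?v = "sh y k"
  have uv: "?u < Suc N" "?v < Suc N" "?u \<noteq> y" "?v \<noteq> y" using ik sh_lt[of _ N y] by (auto simp: sh_def)
  have M1: "mat_delete M y y \<in> carrier_mat N N" using mat_delete_carrier[OF M] by simp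
  have R1C: "R1 R N y \<in> carrier_mat N N" by (simp add: R1_def)
  have "(mat_delete M y y * R1 R N y) $$ (i,k) = (\<Sum>j<N. mat_delete M y y $$ (i, j) * R1 R N y $$ (j,k))"
    by (rule mult_entry[OF M1 R1C ik])
  also have "\<dots> = (\<Sum>j<N. M $$ (?u, sh y j) * R1 R N y $$ (j,k))"
    using M ik by (intro sum.cong[OF refl]) (simp add: mat_delete_def sh_def)
  also have "\<dots> = (\<Sum>j<N. M $$ (?u, sh y j) * (R $$ (sh y j, ?v) - R $$ (sh y j, y) * R $$ (y, ?v) / R $$ (y,y)))"
    using M ik by (intro sum.cong[OF refl]) (auto simp: R1_def mat_delete_def sh_def)
  also have "\<dots> = (\<Sum>j\<in>?V - {y}. M $$ (?u, j) * (R $$ (j, ?v) - R $$ (j, y) * R $$ (y, ?v) / R $$ (y,y)))"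
    by (rule sum_sh[of y N "\<lambda>j. M $$ (?u, j) * (R $$ (j, ?v) - R $$ (j, y) * R $$ (y, ?v) / R $$ (y,y))"]) (use y in simp)
  also have "\<dots> = (\<Sum>j\<in>?V - {y}. M $$ (?u, j) * R $$ (j, ?v)) - (\<Sum>j\<in>?V - {y}. M $$ (?u, j) * R $$ (j, y)) * (R $$ (y, ?v) / R $$ (y,y))"
  proof -
    have "(\<Sum>j\<in>?V - {y}. M $$ (?u, j) * (R $$ (j, ?v) - R $$ (j, y) * R $$ (y, ?v) / R $$ (y,y))) =
      (\<Sum>j\<in>?V - {y}. M $$ (?u, j) * R $$ (j, ?v) - (M $$ (?u, j) * R $$ (j, y)) * (R $$ (y, ?v) / R $$ (y,y)))"
      by (rule sum.cong[OF refl]) (simp add: algebra_simps)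
    thus ?thesis by (simp only: sum_subtractf sum_distrib_right)
  qed
  also have "\<dots> = (if ?u = ?v then 1 else 0)"
    using rowy[OF uv(1,2)] rowy[OF uv(1) y] uv Ryy by (simp add: field_simps)
  also have "\<dots> = 1\<^sub>m N $$ (i,k)" using ik sh_inj[of y] by (auto simp: inj_def)
  finally show "(mat_delete M y y * R1 R N y) $$ (i,k) = 1\<^sub>m N $$ (i,k)" .
qed

lemma del2:
  assumes M: "(M :: real mat) \<in> carrier_mat (Suc N) (Suc N)" and R: "R \<in> carrier_mat (Suc N) (Suc N)"
    and MR: "M * R = 1\<^sub>m (Suc N)" and xy: "x < y" "y < Suc N" and Ryy: "R $$ (y,y) \<noteq> 0"
  shows "det (mat_delete (mat_delete M y y) x x) = det M * (R $$ (x,x) * R $$ (y,y) - R $$ (x,y) * R $$ (y,x))"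
proof -
  have M1: "mat_delete M y y \<in> carrier_mat N N" using mat_delete_carrier[OF M] by simp
  have R1C: "R1 R N y \<in> carrier_mat N N" by (simp add: R1_def)
  have x: "x < N" using xy by simp
  have "det (mat_delete (mat_delete M y y) x x) = det (mat_delete M y y) * R1 R N y $$ (x,x)"
    by (rule del1[OF M1 R1C del_inverse[OF M R MR xy(2) Ryy] x])
  also have "det (mat_delete M y y) = det M * R $$ (y,y)" by (rule del1[OF M R MR xy(2)])
  also have "R1 R N y $$ (x,x) = R $$ (x,x) - R $$ (x,y) * R $$ (y,x) / R $$ (y,y)"
    using x xy by (simp add: R1_def sh_def)
  finally have "det (mat_delete (mat_delete M y y) x x) = det M * (R $$ (y,y) * (R $$ (x,x) - R $$ (x,y) * R $$ (y,x) / R $$ (y,y)))"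
    by (simp add: mult.assoc)
  also have "R $$ (y,y) * (R $$ (x,x) - R $$ (x,y) * R $$ (y,x) / R $$ (y,y)) = R $$ (x,x) * R $$ (y,y) - R $$ (x,y) * R $$ (y,x)"
    using Ryy by (simp add: field_simps)
  finally show ?thesis .
qed

lemma poly_eq_gt: assumes "\<And>z. z > c \<Longrightarrow> poly p z = poly q (z :: real)" shows "p = q"
proof (rule ccontr)
  assume "p \<noteq> q"
  hence "p - q \<noteq> 0" by simp
  hence fin: "finite {z. poly (p - q) z = 0}" by (rule poly_roots_finite)
  have "{c<..} \<subseteq> {z. poly (p - q) z = 0}" using assms by auto
  moreover have "infinite {c<..}" by (rule infinite_Ioi)
  ultimately show False using fin finite_subset by blast
qed

lemma ode_unique:
  fixes P F h k :: "real poly"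
  assumes P: "pderiv P * h = Polynomial.smult (real N) k * P" and F: "pderiv F * h = Polynomial.smult (real N) k * F"
    and dh: "degree h = degree k + 1" and lh: "lead_coeff h = 1" and lk: "lead_coeff k = 1"
    and dP: "degree P = N" "lead_coeff P = 1" and dF: "degree F = N" "lead_coeff F = 1"
  shows "P = F"
proof (rule ccontr)
  assume ne: "P \<noteq> F"
  define G where "G = P - F"
  have G0: "G \<noteq> 0" using ne unfolding G_def by simp
  have Geq: "pderiv G * h = Polynomial.smult (real N) k * G"
  proof -
    have "pderiv G * h = pderiv P * h - pderiv F * h" unfolding G_def pderiv_diff by (rule left_diff_distrib)
    also have "\<dots> = Polynomial.smult (real N) k * P - Polynomial.smult (real N) k * F" using P F by simp
    also have "\<dots> = Polynomial.smult (real N) k * G" unfolding G_def by (rule right_diff_distrib[symmetric])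
    finally show ?thesis .
  qed
  have "coeff G N = 0" unfolding G_def using dP dF by simp
  moreover have "degree G \<le> N" unfolding G_def using dP dF by (intro degree_diff_le) simp_all
  ultimately have dG: "degree G < N" using G0 by (metis le_neq_implies_less leading_coeff_0_iff)
  have k0: "k \<noteq> 0" using lk by auto
  have A1: "coeff (Polynomial.smult (real N) k * G) (degree k + degree G) = real N * lead_coeff G"
    using coeff_mult_degree_sum[of k G] lk by simp
  have A2: "coeff (pderiv G * h) (degree k + degree G) = real (degree G) * lead_coeff G"
  proof (cases "degree G = 0")
    case True
    hence "pderiv G = 0" by (simp add: pderiv_eq_0_iff)
    thus ?thesis using True by simp
  next
    case False
    have dG': "degree (pderiv G) = degree G - 1" by (rule degree_pderiv)
    have "degree k + degree G = degree (pderiv G) + degree h" using dG' dh False by simp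
    hence "coeff (pderiv G * h) (degree k + degree G) = lead_coeff (pderiv G) * lead_coeff h"
      using coeff_mult_degree_sum[of "pderiv G" h] by simp
    also have "lead_coeff (pderiv G) = real (degree G) * lead_coeff G"
      using False unfolding dG' coeff_pderiv by simp
    finally show ?thesis using lh by simp
  qed
  from A2 have "coeff (Polynomial.smult (real N) k * G) (degree k + degree G) = real (degree G) * lead_coeff G"
    unfolding Geq .
  with A1 have "real N * lead_coeff G = real (degree G) * lead_coeff G" by linarith
  moreover have "lead_coeff G \<noteq> 0" using G0 by simp
  ultimately have "real N = real (degree G)" by (metis mult_right_cancel)
  thus False using dG by simp
qed

section \<open>Doubly regular tournaments: resolvent\<close>

locale drt =
  fixes n :: nat and T :: "nat \<Rightarrow> nat \<Rightarrow> bool" and cc :: nat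
  assumes n: "n \<ge> 5" and T: "tournament n T"
    and dr: "\<And>x y. x < n \<Longrightarrow> y < n \<Longrightarrow> x \<noteq> y \<Longrightarrow> card {z. z < n \<and> T x z \<and> T y z} = cc"
begin

definition "dd = 2 * real cc + 1"
definition "qq = real cc + 1"
definition "pz z = z * z + z + qq"
definition "aa z = (z + 1) / pz z"
definition "bb z = 1 / pz z"
definition "gg z = qq / (pz z * (z - dd))"
definition "Rz z = mat n n (\<lambda>(i,j). (if i = j then aa z else 0) + bb z * (if T i j then 1 else 0) + gg z)"

abbreviation "A \<equiv> adj_mat n T"

lemma pz_pos: "z > dd \<Longrightarrow> pz z > 0"
  unfolding pz_def qq_def dd_def by (smt (verit) mult_nonneg_nonneg of_nat_0_le_iff)

lemma n_eq: "n = 4 * cc + 3" using dr_degree(2)[OF n T dr] .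

lemma outdeg: "i < n \<Longrightarrow> (\<Sum>j<n. (of_bool (T i j) :: real)) = dd"
  using dr_degree(1)[OF n T dr, of i] real_card_filter[of n "T i"] unfolding dd_def by simp

lemma sq: "i < n \<Longrightarrow> k < n \<Longrightarrow> (\<Sum>j<n. (of_bool (T i j \<and> T j k) :: real)) = (if i = k then 0 else qq - of_bool (T i k))"
proof (cases "i = k")
  case True
  assume "i < n"
  have "(\<Sum>j<n. (of_bool (T i j \<and> T j i) :: real)) = 0"
    using T \<open>i < n\<close> unfolding tournament_def by (intro sum.neutral) auto
  thus ?thesis using True by simp
next
  case False
  assume "i < n" "k < n"
  thus ?thesis using dr_sq[OF n T dr \<open>i < n\<close> \<open>k < n\<close> False] False unfolding qq_def by simp
qed

lemma Rz_carrier[simp]: "Rz z \<in> carrier_mat n n" unfolding Rz_def by simp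

lemma inverse: assumes z: "z > dd" shows "zmat n z A * Rz z = 1\<^sub>m n"
proof (rule eq_matI)
  show "dim_row (zmat n z A * Rz z) = dim_row (1\<^sub>m n)" "dim_col (zmat n z A * Rz z) = dim_col (1\<^sub>m n)"
    by (simp_all add: zmat_def Rz_def)
  fix i k assume "i < dim_row (1\<^sub>m n)" "k < dim_col (1\<^sub>m n)"
  hence ik: "i < n" "k < n" by auto
  let ?a = "aa z" and ?b = "bb z" and ?g = "gg z"
  let ?al = "\<lambda>i j. (of_bool (T i j) :: real)"
  have p0: "pz z \<noteq> 0" using pz_pos[OF z] by simp
  have zd: "z - dd \<noteq> 0" using z by simp
  have "(zmat n z A * Rz z) $$ (i,k) = (\<Sum>j<n. zmat n z A $$ (i,j) * Rz z $$ (j,k))"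
    by (rule mult_entry[OF zmat_carrier Rz_carrier ik])
  also have "\<dots> = (\<Sum>j<n. (if j = i then z * ((if i = k then ?a else 0) + ?b * ?al i k + ?g) else 0)
       - (if j = k then ?a * ?al i k else 0) - ?b * of_bool (T i j \<and> T j k) - ?g * ?al i j)"
  proof (rule sum.cong[OF refl])
    fix j assume j: "j \<in> {..<n}"
    have irr: "\<not> T i i" "\<not> T k k" using T ik unfolding tournament_def by auto
    show "zmat n z A $$ (i,j) * Rz z $$ (j,k) = (if j = i then z * ((if i = k then ?a else 0) + ?b * ?al i k + ?g) else 0)
       - (if j = k then ?a * ?al i k else 0) - ?b * of_bool (T i j \<and> T j k) - ?g * ?al i j"
      using ik j irr by (auto simp: zmat_def Rz_def algebra_simps)
  qed
  also have "\<dots> = z * ((if i = k then ?a else 0) + ?b * ?al i k + ?g) - ?a * ?al i k - ?b * (\<Sum>j<n. of_bool (T i j \<and> T j k)) - ?g * dd"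
    using ik outdeg[OF ik(1)] by (simp add: sum_subtractf sum_distrib_left[symmetric] sum.delta')
  also have "\<dots> = 1\<^sub>m n $$ (i,k)"
  proof (cases "i = k")
    case True
    have "\<not> T i i" using T ik unfolding tournament_def by auto
    have g: "gg z * (z - dd) = qq / pz z" using zd p0 unfolding gg_def by (simp add: field_simps)
    have a: "z * aa z + qq / pz z = 1"
    proof -
      have "z * aa z + qq / pz z = (z * (z + 1) + qq) / pz z" unfolding aa_def by (simp add: add_divide_distrib[symmetric] times_divide_eq_right)
      also have "z * (z + 1) + qq = pz z" by (simp add: pz_def algebra_simps)
      finally show ?thesis using p0 by simp
    qed
    have "z * ((if i = k then ?a else 0) + ?b * ?al i k + ?g) - ?a * ?al i k - ?b * (\<Sum>j<n. of_bool (T i j \<and> T j k)) - ?g * dd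
          = z * aa z + gg z * (z - dd)"
      using True \<open>\<not> T i i\<close> sq[OF ik] by (simp add: algebra_simps)
    thus ?thesis using g a True ik by simp
  next
    case False
    have g: "gg z * (z - dd) - bb z * qq = 0" using zd p0 unfolding gg_def bb_def by (simp add: field_simps)
    have e: "z * bb z - aa z + bb z = 0" using p0 unfolding aa_def bb_def by (simp add: field_simps)
    have "z * ((if i = k then ?a else 0) + ?b * ?al i k + ?g) - ?a * ?al i k - ?b * (\<Sum>j<n. of_bool (T i j \<and> T j k)) - ?g * dd
          = ?al i k * (z * bb z - aa z + bb z) + (gg z * (z - dd) - bb z * qq)"
    proof -
      have S2: "(\<Sum>j<n. (of_bool (T i j \<and> T j k) :: real)) = qq - of_bool (T i k)" using False sq[OF ik] by simp
      show ?thesis unfolding S2 using False by (simp add: algebra_simps)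
    qed
    thus ?thesis using g e False ik by simp
  qed
  finally show "(zmat n z A * Rz z) $$ (i,k) = 1\<^sub>m n $$ (i,k)" .
qed


lemma R_diag: "i < n \<Longrightarrow> Rz z $$ (i,i) = aa z + gg z"
  using T unfolding Rz_def tournament_def by simp

lemma R_off: "i < n \<Longrightarrow> k < n \<Longrightarrow> i \<noteq> k \<Longrightarrow> Rz z $$ (i,k) = bb z * of_bool (T i k) + gg z"
  unfolding Rz_def by simp

lemma ag_pos: "z > dd \<Longrightarrow> aa z + gg z > 0"
proof -
  assume z: "z > dd"
  have "dd \<ge> 1" unfolding dd_def by simp
  hence "aa z > 0" using z pz_pos[OF z] unfolding aa_def by simp
  moreover have "gg z > 0" using z pz_pos[OF z] unfolding gg_def qq_def by simp
  ultimately show ?thesis by simp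
qed

definition "hpoly = [:qq, 1, 1:] * [:-dd, 1:]"
definition "kpoly = [:1, 1:] * [:-dd, 1:] + [:qq:]"

lemma ag_eq: "z > dd \<Longrightarrow> aa z + gg z = poly kpoly z / poly hpoly z"
proof -
  assume z: "z > dd"
  have p0: "pz z \<noteq> 0" using pz_pos[OF z] by simp
  have H: "poly hpoly z = pz z * (z - dd)" unfolding hpoly_def pz_def by (simp add: algebra_simps)
  have K: "poly kpoly z = (z + 1) * (z - dd) + qq" unfolding kpoly_def by (simp add: algebra_simps)
  have zd: "z - dd \<noteq> 0" using z by simp
  show ?thesis unfolding H K aa_def gg_def using zd p0 by (simp add: field_simps)
qed

lemma det_zmat: "z > dd \<Longrightarrow> poly (char_poly A) z = det (zmat n z A)"
  by (rule poly_char_poly) simp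

lemma ode: "pderiv (char_poly A) * hpoly = Polynomial.smult (real n) kpoly * char_poly A"
proof (rule poly_eq_gt[of dd])
  fix z assume z: "z > dd"
  obtain N where N: "n = Suc N" using n by (cases n) auto
  let ?M = "zmat n z A"
  have hz: "poly hpoly z \<noteq> 0"
  proof -
    have "poly hpoly z = pz z * (z - dd)" unfolding hpoly_def pz_def by (simp add: algebra_simps)
    thus ?thesis using pz_pos[OF z] z by simp
  qed
  have "pderiv (char_poly A) = (\<Sum>i<n. char_poly (mat_delete A i i))"
    by (rule pderiv_char_poly) simp
  hence "poly (pderiv (char_poly A)) z = (\<Sum>i<n. poly (char_poly (mat_delete A i i)) z)"
    by (simp add: poly_sum)
  also have "\<dots> = (\<Sum>i<n. det ?M * (aa z + gg z))"
  proof (rule sum.cong[OF refl])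
    fix i assume i: "i \<in> {..<n}"
    have AC: "A \<in> carrier_mat (Suc N) (Suc N)" using N by simp
    have "poly (char_poly (mat_delete A i i)) z = det (zmat N z (mat_delete A i i))"
      by (rule poly_char_poly) (use mat_delete_carrier[OF AC] in simp)
    also have "zmat N z (mat_delete A i i) = mat_delete ?M i i"
      using zmat_delete[OF AC, of i z] i N by simp
    also have "det (mat_delete ?M i i) = det ?M * Rz z $$ (i,i)"
      by (rule del1[OF zmat_carrier Rz_carrier inverse[OF z]]) (use i in simp)
    finally show "poly (char_poly (mat_delete A i i)) z = det ?M * (aa z + gg z)" using R_diag i by simp
  qed
  also have "\<dots> = real n * (aa z + gg z) * poly (char_poly A) z" using det_zmat[OF z] by simp
  finally have "poly (pderiv (char_poly A)) z = real n * (aa z + gg z) * poly (char_poly A) z" .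
  thus "poly (pderiv (char_poly A) * hpoly) z = poly (Polynomial.smult (real n) kpoly * char_poly A) z"
    using ag_eq[OF z] hz by (simp add: field_simps)
qed


definition "Fpoly = [:-dd, 1:] * [:qq, 1, 1:] ^ (2 * cc + 1)"

lemma real_n: "real n = 4 * real cc + 3" using n_eq by simp

lemma F_ode: "pderiv Fpoly * hpoly = Polynomial.smult (real n) kpoly * Fpoly"
proof -
  define p where "p = [:qq, 1, 1:]"
  define X where "X = [:-dd, 1:]"
  let ?m = "2 * cc"
  have pd: "pderiv p = [:1, 2:]" unfolding p_def by (simp add: pderiv_pCons)
  have pdX: "pderiv X = 1" unfolding X_def by (simp add: pderiv_pCons)
  have F: "Fpoly = X * p ^ Suc ?m" unfolding Fpoly_def p_def X_def by simp
  have h: "hpoly = p * X" unfolding hpoly_def p_def X_def by simp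
  have "pderiv Fpoly = X * (Polynomial.smult (of_nat (Suc ?m)) (p ^ ?m) * [:1, 2:]) + p ^ Suc ?m"
    unfolding F pderiv_mult pderiv_power_Suc pd pdX by simp
  hence "pderiv Fpoly * hpoly = p ^ ?m * X * p * (p + Polynomial.smult (of_nat (Suc ?m)) (X * [:1, 2:]))"
    unfolding h by (simp add: algebra_simps mult_smult_left mult_smult_right)
  also have "p + Polynomial.smult (of_nat (Suc ?m)) (X * [:1, 2:]) = Polynomial.smult (real n) kpoly"
    unfolding kpoly_def real_n dd_def qq_def p_def X_def by (simp add: algebra_simps)
  also have "p ^ ?m * X * p * Polynomial.smult (real n) kpoly = Polynomial.smult (real n) kpoly * Fpoly"
    unfolding F by (simp add: algebra_simps)
  finally show ?thesis .
qed

lemma charpoly_A: "char_poly A = Fpoly"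
proof (rule ode_unique[OF ode F_ode])
  show "degree hpoly = degree kpoly + 1" "lead_coeff hpoly = 1" "lead_coeff kpoly = 1"
    unfolding hpoly_def kpoly_def by simp_all
  show "degree (char_poly A) = n" "lead_coeff (char_poly A) = 1"
    using degree_monic_char_poly[of A n] by simp_all
  define p where "p = [:qq, 1, 1:]"
  have p0: "p \<noteq> 0" and dp: "degree p = 2" unfolding p_def by simp_all
  have "degree Fpoly = degree [:-dd, 1:] + degree (p ^ (2 * cc + 1))" unfolding Fpoly_def p_def[symmetric]
    by (rule degree_mult_eq) (use p0 in simp_all)
  thus "degree Fpoly = n" using n_eq by (simp add: degree_power_eq[OF p0] dp del: power_Suc)
  have lp: "lead_coeff p = 1" unfolding p_def by simp
  show "lead_coeff Fpoly = 1" unfolding Fpoly_def p_def[symmetric] lead_coeff_mult lead_coeff_power lp by simp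
qed


lemma cc_pos: "cc \<ge> 1" using n_eq n by simp

lemma final_alg:
  assumes z: "z > dd"
  shows "poly Fpoly z * ((aa z + gg z) * (aa z + gg z) - gg z * (bb z + gg z)) =
    poly ([: (real n + 1) / 4, 1, 1 :] ^ ((n - 5) div 2) *
          [: - (real n - 3) / 4, - (real n - 5) / 2, - (real n - 5) / 2, 1 :]) z"
proof -
  define u where "u = z - dd"
  define P where "P = pz z"
  have u0: "u \<noteq> 0" using z unfolding u_def by simp
  have P0: "P \<noteq> 0" using pz_pos[OF z] unfolding P_def by simp
  define m where "m = 2 * cc - 1"
  have m: "2 * cc + 1 = m + 2" "(n - 5) div 2 = m" using cc_pos n_eq unfolding m_def by auto
  have q4: "(real n + 1) / 4 = qq" unfolding real_n qq_def by simp
  have polyp: "poly [:qq, 1, 1:] z = P" unfolding P_def pz_def by (simp add: algebra_simps)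
  have px: "poly [:-dd, 1:] z = u" unfolding u_def by simp
  have polyF: "poly Fpoly z = u * P ^ m * P ^ 2"
    unfolding Fpoly_def poly_mult poly_power polyp px m(1) power_add by (simp only: mult.assoc)
  define K where "K = (z + 1) * u + qq"
  have zu: "z - dd = u" unfolding u_def ..
  have ag: "aa z + gg z = K / (P * u)" unfolding aa_def gg_def K_def P_def[symmetric] zu using u0 P0
    by (simp add: field_simps)
  have g: "gg z = qq / (P * u)" unfolding gg_def P_def u_def ..
  have b: "bb z = 1 / P" unfolding bb_def P_def ..
  define cub where "cub = (z + 1) * (z + 1) * u + qq * (2 * z + 1)"
  have num: "K * K - qq * u - qq * qq = u * cub" unfolding K_def cub_def by (simp add: algebra_simps)
  have "u * P ^ 2 * ((aa z + gg z) * (aa z + gg z) - gg z * (bb z + gg z)) = (K * K - qq * u - qq * qq) / u"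
    unfolding ag unfolding g b using u0 P0 by (simp add: field_simps power2_eq_square)
  also have "\<dots> = cub" using num u0 by simp
  also have "cub = poly [: - (real n - 3) / 4, - (real n - 5) / 2, - (real n - 5) / 2, 1 :] z"
    unfolding cub_def u_def real_n dd_def qq_def by (simp add: algebra_simps) (simp add: field_simps)
  finally have c: "u * P ^ 2 * ((aa z + gg z) * (aa z + gg z) - gg z * (bb z + gg z)) =
      poly [: - (real n - 3) / 4, - (real n - 5) / 2, - (real n - 5) / 2, 1 :] z" .
  show ?thesis unfolding polyF poly_mult poly_power q4 m(2) polyp c[symmetric] by (simp add: algebra_simps)
qed


lemma dr_formula:
  assumes xy: "x < y" "y < n"
  shows "char_poly (principal_submatrix A ({0..<n} - {x, y})) =
    [: (real n + 1) / 4, 1, 1 :] ^ ((n - 5) div 2) *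
    [: - (real n - 3) / 4, - (real n - 5) / 2, - (real n - 5) / 2, 1 :]"
proof -
  obtain N where N: "n = Suc N" using n by (cases n) auto
  obtain N2 where N2: "N = Suc N2" using n N by (cases N) auto
  have AC: "A \<in> carrier_mat (Suc N) (Suc N)" using N by simp
  have A1: "mat_delete A y y \<in> carrier_mat (Suc N2) (Suc N2)" using mat_delete_carrier[OF AC, of y y] N2 by simp
  have A2: "mat_delete (mat_delete A y y) x x \<in> carrier_mat N2 N2" using mat_delete_carrier[OF A1, of x x] by simp
  have "char_poly (principal_submatrix A ({0..<n} - {x, y})) = char_poly (mat_delete (mat_delete A y y) x x)"
    using principal_double_delete[OF adj_mat_carrier xy] by simp
  also have "\<dots> = [: (real n + 1) / 4, 1, 1 :] ^ ((n - 5) div 2) *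
    [: - (real n - 3) / 4, - (real n - 5) / 2, - (real n - 5) / 2, 1 :]"
  proof (rule poly_eq_gt[of dd])
    fix z assume z: "z > dd"
    let ?M = "zmat n z A" and ?R = "Rz z"
    have "poly (char_poly (mat_delete (mat_delete A y y) x x)) z = det (zmat N2 z (mat_delete (mat_delete A y y) x x))"
      by (rule poly_char_poly[OF A2])
    also have "zmat N2 z (mat_delete (mat_delete A y y) x x) = mat_delete (zmat N z (mat_delete A y y)) x x"
      using zmat_delete[OF A1, of x z] xy N N2 by simp
    also have "zmat N z (mat_delete A y y) = mat_delete ?M y y"
      using zmat_delete[OF AC, of y z] xy N by simp
    also have "det (mat_delete (mat_delete ?M y y) x x) = det ?M * (?R $$ (x,x) * ?R $$ (y,y) - ?R $$ (x,y) * ?R $$ (y,x))"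
    proof (rule del2)
      show "?M \<in> carrier_mat (Suc N) (Suc N)" "?R \<in> carrier_mat (Suc N) (Suc N)" unfolding N[symmetric] by simp_all
      show "?M * ?R = 1\<^sub>m (Suc N)" using inverse[OF z] unfolding N[symmetric] .
      show "x < y" "y < Suc N" using xy N by auto
      show "?R $$ (y,y) \<noteq> 0" using R_diag[of y z] ag_pos[OF z] xy by simp
    qed
    also have "?R $$ (x,x) * ?R $$ (y,y) - ?R $$ (x,y) * ?R $$ (y,x) = (aa z + gg z) * (aa z + gg z) - gg z * (bb z + gg z)"
    proof -
      have xn: "x < n" "x \<noteq> y" using xy by auto
      have "T x y \<longleftrightarrow> \<not> T y x" using T xn xy(2) unfolding tournament_def by blast
      thus ?thesis using R_diag[of x z] R_diag[of y z] R_off[of x y z] R_off[of y x z] xy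
        by (cases "T x y") (simp_all add: algebra_simps)
    qed
    also have "det ?M = poly Fpoly z" using det_zmat[OF z] charpoly_A by simp
    finally show "poly (char_poly (mat_delete (mat_delete A y y) x x)) z = poly ([: (real n + 1) / 4, 1, 1 :] ^ ((n - 5) div 2) *
      [: - (real n - 3) / 4, - (real n - 5) / 2, - (real n - 5) / 2, 1 :]) z"
      using final_alg[OF z] by simp
  qed
  finally show ?thesis .
qed

end


lemma transitive_comp:
  assumes "transitive_tournament n T" "\<And>i. i < k \<Longrightarrow> f i < n"
  shows "transitive_tournament k (\<lambda>i j. T (f i) (f j))"
  using assms unfolding transitive_tournament_def by blast

lemma trans_sub:
  assumes n: "n \<ge> 5" and T: "tournament n T" and tr: "transitive_tournament n T"
    and I: "I \<subseteq> {0..<n}" "card I = n - 2"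
  shows "char_poly (principal_submatrix (adj_mat n T) I) = monom 1 (n - 2)"
proof -
  obtain x y where xy: "x < y" "y < n" and Ieq: "I = {0..<n} - {x, y}" using card_n2_form[OF I] n by auto
  let ?f = "\<lambda>i. sh y (sh x i)"
  have fb: "?f i < n" if "i < n - 2" for i
  proof -
    have "?f i \<in> ?f ` {0..<n-2}" using that by auto
    thus ?thesis unfolding img_double[OF xy] by auto
  qed
  have "principal_submatrix (adj_mat n T) I = adj_mat (n-2) (\<lambda>i j. T (?f i) (?f j))"
    unfolding Ieq using principal_double_delete[OF adj_mat_carrier xy] double_delete_adj[OF xy] by simp
  moreover have "char_poly (adj_mat (n-2) (\<lambda>i j. T (?f i) (?f j))) = monom 1 (n - 2)"
    by (rule trans_charpoly[OF tournament_comp[OF T inj_double fb] transitive_comp[OF tr fb]])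
  ultimately show ?thesis by simp
qed

lemma dr_sub:
  assumes n: "n \<ge> 5" and T: "tournament n T" and dr: "doubly_regular n T"
    and I: "I \<subseteq> {0..<n}" "card I = n - 2"
  shows "char_poly (principal_submatrix (adj_mat n T) I) =
                 [: (real n + 1) / 4, 1, 1 :] ^ ((n - 5) div 2) *
                 [: - (real n - 3) / 4, - (real n - 5) / 2, - (real n - 5) / 2, 1 :]"
proof -
  obtain cc where cc: "\<And>x y. x < n \<Longrightarrow> y < n \<Longrightarrow> x \<noteq> y \<Longrightarrow> card {z. z < n \<and> T x z \<and> T y z} = cc"
    using dr unfolding doubly_regular_def by blast
  interpret drt n T cc using n T cc by unfold_locales auto
  obtain x y where xy: "x < y" "y < n" and Ieq: "I = {0..<n} - {x, y}" using card_n2_form[OF I] n by auto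
  show ?thesis unfolding Ieq by (rule dr_formula[OF xy])
qed

theorem theorem1p1:
  fixes n :: nat and T :: "nat \<Rightarrow> nat \<Rightarrow> bool"
  assumes "n \<ge> 5" and "tournament n T"
  shows "(spectrally_monomorphic (n - 2) (adj_mat n T) \<longleftrightarrow>
            transitive_tournament n T \<or> doubly_regular n T) \<and>
         (doubly_regular n T \<longrightarrow>
            (\<forall>I. I \<subseteq> {0..<n} \<and> card I = n - 2 \<longrightarrow>
               char_poly (principal_submatrix (adj_mat n T) I) =
                 [: (real n + 1) / 4, 1, 1 :] ^ ((n - 5) div 2) *
                 [: - (real n - 3) / 4, - (real n - 5) / 2, - (real n - 5) / 2, 1 :]))"
proof (intro conjI impI allI iffI)
  assume "spectrally_monomorphic (n - 2) (adj_mat n T)"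
  thus "transitive_tournament n T \<or> doubly_regular n T" by (rule hard_direction[OF assms])
next
  assume "transitive_tournament n T \<or> doubly_regular n T"
  thus "spectrally_monomorphic (n - 2) (adj_mat n T)"
  proof
    assume tr: "transitive_tournament n T"
    show ?thesis unfolding spectrally_monomorphic_def
      using trans_sub[OF assms tr] by simp
  next
    assume dr: "doubly_regular n T"
    show ?thesis unfolding spectrally_monomorphic_def
      using dr_sub[OF assms dr] by simp
  qed
next
  fix I assume "doubly_regular n T" "I \<subseteq> {0..<n} \<and> card I = n - 2"
  thus "char_poly (principal_submatrix (adj_mat n T) I) =
                 [: (real n + 1) / 4, 1, 1 :] ^ ((n - 5) div 2) *
                 [: - (real n - 3) / 4, - (real n - 5) / 2, - (real n - 5) / 2, 1 :]"
    using dr_sub[OF assms] by blast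
qed

end
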